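(* Fix $a\in(0,1/2)$ and $b\in(0,1)$. There exist constants $c_1>0$ and $c_2>0$ (independent of $n$) such that for all sufficiently large $n$ of the form $n=2^{h+1}-1$, the random-neighbor variant process on the full binary tree with $n$ vertices, rooted at its root, satisfies $\Pr[\tau_{\mathrm{conv}}\ge c_2n]\ge c_1a$.
   Context: Random-neighbor variant. Fix $a,b\in[0,1]$, a connected graph $G=(V,E)$ and a root $r$. Labels $f_t:V\to\{+1,-1,\bot\}$ with $f_t(r)=+1$ for all $t$ and $f_0(v)=\bot$ for $v\ne r$. For $t\ge1$ and each $v\neq r$ independently, let $N_{t-1}(v)=\{u:(u,v)\in E,\ f_{t-1}(u)\ne\bot\}$. If $f_{t-1}(v)=\bot$ and $N_{t-1}(v)=\emptyset$, then $f_t(v)=\bot$. If $f_{t-1}(v)=\bot$ and $N_{t-1}(v)\neq\emptyset$, pick $w$ uniformly from $N_{t-1}(v)$ and set $f_t(v)=f_{t-1}(w)$ w.p. $1-a$ and $-f_{t-1}(w)$ w.p. $a$. If $f_{t-1}(v)\ne\bot$, pick $w$ uniformly at random from $N_{t-1}(v)$ (afresh every round) and set $f_t(v)=f_{t-1}(w)$ w.p. $b$ and $f_t(v)=f_{t-1}(v)$ w.p. $1-b$. The convergence time is $\tau_{\mathrm{conv}}=\min\{t: f_t(v)=+1\ \forall v\in V\}$. The full binary tree of height $h$ has $2^{h+1}-1$ vertices; every non-leaf vertex has exactly two children and all leaves are at distance $h$ from the root. *)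

theory Defs
  imports "HOL-Probability.Probability"
begin

datatype label = Pos | Neg | Bot

fun neg_label :: "label \<Rightarrow> label" where
  "neg_label Pos = Neg" | "neg_label Neg = Pos" | "neg_label Bot = Bot"

type_synonym 'v state = "'v \<Rightarrow> label"

text \<open>Graph: finite vertex set V, symmetric edge set E (pairs), root r.
  Labelled neighbours of v in state f.\<close>
definition labelled_nbrs :: "'v set \<Rightarrow> ('v \<times> 'v) set \<Rightarrow> 'v state \<Rightarrow> 'v \<Rightarrow> 'v set" where
  "labelled_nbrs V E f v = {u \<in> V. (u, v) \<in> E \<and> f u \<noteq> Bot}"

definition vertex_update ::
  "'v set \<Rightarrow> ('v \<times> 'v) set \<Rightarrow> 'v \<Rightarrow> real \<Rightarrow> real \<Rightarrow> 'v state \<Rightarrow> 'v \<Rightarrow> label pmf" where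
  "vertex_update V E r a b f v =
     (let N = labelled_nbrs V E f v in
      if v = r then return_pmf Pos
      else if f v = Bot then
        (if N = {} then return_pmf Bot
         else do { w \<leftarrow> pmf_of_set N; flip \<leftarrow> bernoulli_pmf a;
                   return_pmf (if flip then neg_label (f w) else f w) })
      else
        (if N = {} then return_pmf (f v)
         else do { w \<leftarrow> pmf_of_set N; copy \<leftarrow> bernoulli_pmf b;
                   return_pmf (if copy then f w else f v) }))"

definition step ::
  "'v set \<Rightarrow> ('v \<times> 'v) set \<Rightarrow> 'v \<Rightarrow> real \<Rightarrow> real \<Rightarrow> 'v state \<Rightarrow> 'v state pmf" where
  "step V E r a b f = Pi_pmf V Bot (vertex_update V E r a b f)"

definition init_state :: "'v \<Rightarrow> 'v state" where
  "init_state r = (\<lambda>v. if v = r then Pos else Bot)"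

fun traj ::
  "'v set \<Rightarrow> ('v \<times> 'v) set \<Rightarrow> 'v \<Rightarrow> real \<Rightarrow> real \<Rightarrow> nat \<Rightarrow> 'v state list pmf" where
  "traj V E r a b 0 = return_pmf [init_state r]"
| "traj V E r a b (Suc k) =
     traj V E r a b k \<bind> (\<lambda>xs. map_pmf (\<lambda>s. xs @ [s]) (step V E r a b (last xs)))"

definition all_pos :: "'v set \<Rightarrow> 'v state \<Rightarrow> bool" where
  "all_pos V f \<longleftrightarrow> (\<forall>v\<in>V. f v = Pos)"

text \<open>Pr[tau_conv >= T] = Pr[no f_t with t < T is all +1].\<close>
definition prob_tau_ge ::
  "'v set \<Rightarrow> ('v \<times> 'v) set \<Rightarrow> 'v \<Rightarrow> real \<Rightarrow> real \<Rightarrow> nat \<Rightarrow> real" where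
  "prob_tau_ge V E r a b T =
     measure_pmf.prob (traj V E r a b T) {xs. \<forall>t<T. \<not> all_pos V (xs ! t)}"

text \<open>Full binary tree of height h in heap numbering: vertices 1..2^(h+1)-1,
  root 1, children of v are 2v and 2v+1.\<close>
definition bt_vertices :: "nat \<Rightarrow> nat set" where
  "bt_vertices h = {1..2^(h+1) - 1}"

definition bt_edges :: "nat \<Rightarrow> (nat \<times> nat) set" where
  "bt_edges h = {(u, v). u \<in> bt_vertices h \<and> v \<in> bt_vertices h \<and>
                         (u = v div 2 \<or> v = u div 2) \<and> u \<noteq> v}"

end

theory Submission imports Defs begin

lemma vu_set:
  assumes "finite V" "x \<in> set_pmf (vertex_update V E r a b f v)"
  shows "(v = r \<and> x = Pos) \<or>
         (v \<noteq> r \<and> labelled_nbrs V E f v = {} \<and> x = f v) \<or>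
         (v \<noteq> r \<and> labelled_nbrs V E f v \<noteq> {} \<and> f v = Bot \<and>
            (\<exists>w\<in>labelled_nbrs V E f v. x = f w \<or> x = neg_label (f w))) \<or>
         (v \<noteq> r \<and> labelled_nbrs V E f v \<noteq> {} \<and> f v \<noteq> Bot \<and>
            (x = f v \<or> (\<exists>w\<in>labelled_nbrs V E f v. x = f w)))"
proof -
  have fin: "finite (labelled_nbrs V E f v)" using assms(1) unfolding labelled_nbrs_def by auto
  show ?thesis using assms(2) fin unfolding vertex_update_def Let_def
    by (auto split: if_splits simp: set_pmf_of_set)
qed

lemma neg_label_nonbot: "x \<noteq> Bot \<Longrightarrow> neg_label x \<noteq> Bot"
  by (cases x) auto

lemma step_set:
  assumes "finite V" "g \<in> set_pmf (step V E r a b f)"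
  shows "\<forall>v. v \<notin> V \<longrightarrow> g v = Bot" "\<forall>v\<in>V. g v \<in> set_pmf (vertex_update V E r a b f v)"
  using set_Pi_pmf_subset'[OF assms(1), of Bot "vertex_update V E r a b f"] assms(2)
  unfolding step_def PiE_dflt_def by auto

fun st :: "'v set \<Rightarrow> ('v \<times> 'v) set \<Rightarrow> 'v \<Rightarrow> real \<Rightarrow> real \<Rightarrow> nat \<Rightarrow> 'v state pmf" where
  "st V E r a b 0 = return_pmf (init_state r)"
| "st V E r a b (Suc k) = st V E r a b k \<bind> step V E r a b"

lemma last_len: "length xs = Suc k \<Longrightarrow> last xs = xs ! k"
  by (metis diff_Suc_1 last_conv_nth list.size(3) nat.distinct(1))

lemma traj_length: "xs \<in> set_pmf (traj V E r a b k) \<Longrightarrow> length xs = Suc k"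
  by (induction k arbitrary: xs) auto

lemma traj_marg: "j \<le> k \<Longrightarrow> map_pmf (\<lambda>xs. xs ! j) (traj V E r a b k) = st V E r a b j"
proof (induction k arbitrary: j)
  case 0 then show ?case by simp
next
  case (Suc k)
  have "map_pmf (\<lambda>xs. xs ! j) (traj V E r a b (Suc k)) =
        traj V E r a b k \<bind> (\<lambda>xs. map_pmf (\<lambda>s. (xs @ [s]) ! j) (step V E r a b (last xs)))"
    by (simp add: map_bind_pmf map_pmf_comp)
  show ?case
  proof (cases "j \<le> k")
    case True
    have "traj V E r a b k \<bind> (\<lambda>xs. map_pmf (\<lambda>s. (xs @ [s]) ! j) (step V E r a b (last xs)))
        = traj V E r a b k \<bind> (\<lambda>xs. return_pmf (xs ! j))"
    proof (rule bind_pmf_cong[OF refl])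
      fix xs assume "xs \<in> set_pmf (traj V E r a b k)"
      then have "length xs = Suc k" by (rule traj_length)
      then have "\<And>s. (xs @ [s]) ! j = xs ! j" using True by (simp add: nth_append)
      then show "map_pmf (\<lambda>s. (xs @ [s]) ! j) (step V E r a b (last xs)) = return_pmf (xs ! j)"
        by (simp add: map_pmf_const)
    qed
    also have "\<dots> = map_pmf (\<lambda>xs. xs ! j) (traj V E r a b k)" by (simp add: map_pmf_def)
    finally show ?thesis using Suc True \<open>map_pmf _ _ = _\<close> by simp
  next
    case False
    then have j: "j = Suc k" using Suc by simp
    have "traj V E r a b k \<bind> (\<lambda>xs. map_pmf (\<lambda>s. (xs @ [s]) ! j) (step V E r a b (last xs)))
        = traj V E r a b k \<bind> (\<lambda>xs. step V E r a b (xs ! k))"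
    proof (rule bind_pmf_cong[OF refl])
      fix xs assume "xs \<in> set_pmf (traj V E r a b k)"
      then have "length xs = Suc k" by (rule traj_length)
      then show "map_pmf (\<lambda>s. (xs @ [s]) ! j) (step V E r a b (last xs)) = step V E r a b (xs ! k)"
        using j by (simp add: nth_append last_len)
    qed
    also have "\<dots> = map_pmf (\<lambda>xs. xs ! k) (traj V E r a b k) \<bind> step V E r a b"
      by (simp add: bind_map_pmf)
    also have "\<dots> = st V E r a b j" using Suc.IH[of k] j by simp
    finally show ?thesis using \<open>map_pmf _ _ = _\<close> by simp
  qed
qed

lemma step_allpos:
  assumes "finite V" "r \<in> V" "all_pos V f" "g \<in> set_pmf (step V E r a b f)"
  shows "all_pos V g"
  unfolding all_pos_def
proof
  fix v assume v: "v \<in> V"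
  have x: "g v \<in> set_pmf (vertex_update V E r a b f v)" using step_set(2)[OF assms(1,4)] v by auto
  have "\<forall>w\<in>labelled_nbrs V E f v. f w = Pos" using assms(3) unfolding all_pos_def labelled_nbrs_def by auto
  moreover have "f v = Pos" using assms(3) v unfolding all_pos_def by auto
  ultimately show "g v = Pos" using vu_set[OF assms(1) x] by auto
qed

lemma traj_absorb:
  assumes "finite V" "r \<in> V"
  shows "xs \<in> set_pmf (traj V E r a b k) \<Longrightarrow> i < k \<Longrightarrow> all_pos V (xs ! i) \<Longrightarrow> all_pos V (xs ! Suc i)"
proof (induction k arbitrary: xs)
  case 0 then show ?case by simp
next
  case (Suc k)
  from Suc.prems(1) obtain ys s where ys: "ys \<in> set_pmf (traj V E r a b k)" "s \<in> set_pmf (step V E r a b (last ys))"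
    and xs: "xs = ys @ [s]" by auto
  have len: "length ys = Suc k" using traj_length[OF ys(1)] .
  show ?case
  proof (cases "i < k")
    case True
    then show ?thesis using Suc.IH[OF ys(1)] Suc.prems len xs by (simp add: nth_append)
  next
    case False
    then have i: "i = k" using Suc.prems by simp
    have "all_pos V (last ys)" using Suc.prems(3) i xs len by (simp add: nth_append last_len)
    then have "all_pos V s" using step_allpos[OF assms _ ys(2)] by simp
    then show ?thesis using i xs len by (simp add: nth_append)
  qed
qed

lemma traj_absorb2:
  assumes "finite V" "r \<in> V" "xs \<in> set_pmf (traj V E r a b k)" "t \<le> j" "j \<le> k" "all_pos V (xs ! t)"
  shows "all_pos V (xs ! j)"
  using assms(4,5,6)
proof (induction j rule: dec_induct)
  case base then show ?case by simp
next
  case (step j) then show ?case using traj_absorb[OF assms(1,2,3)] by simp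
qed

lemma prob_tau_ge_lb:
  assumes "finite V" "r \<in> V" "T > 0"
  shows "prob_tau_ge V E r a b T \<ge> measure_pmf.prob (st V E r a b (T - 1)) {f. \<not> all_pos V f}"
proof -
  have "measure_pmf.prob (st V E r a b (T - 1)) {f. \<not> all_pos V f} =
        measure_pmf.prob (traj V E r a b T) {xs. \<not> all_pos V (xs ! (T - 1))}"
    by (subst traj_marg[of "T - 1" T V E r a b, symmetric]) (simp_all add: measure_map_pmf vimage_def)
  also have "\<dots> = measure_pmf.prob (traj V E r a b T) ({xs. \<not> all_pos V (xs ! (T - 1))} \<inter> set_pmf (traj V E r a b T))"
    by (simp add: measure_Int_set_pmf)
  also have "\<dots> \<le> measure_pmf.prob (traj V E r a b T) {xs. \<forall>t<T. \<not> all_pos V (xs ! t)}"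
  proof (rule measure_pmf.finite_measure_mono)
    show "{xs. \<not> all_pos V (xs ! (T - 1))} \<inter> set_pmf (traj V E r a b T) \<subseteq> {xs. \<forall>t<T. \<not> all_pos V (xs ! t)}"
    proof (intro subsetI CollectI allI impI notI)
      fix xs t assume xs: "xs \<in> {xs. \<not> all_pos V (xs ! (T - 1))} \<inter> set_pmf (traj V E r a b T)"
        and t: "t < T" and ap: "all_pos V (xs ! t)"
      have tt: "t \<le> T - 1" using t by linarith
      have xin: "xs \<in> set_pmf (traj V E r a b T)" using xs by blast
      have "all_pos V (xs ! (T - 1))"
        by (rule traj_absorb2[OF assms(1,2) xin tt _ ap]) simp
      have "all_pos V (xs ! (T - 1))"
        by fact
      then show False using xs by auto
    qed
  qed simp
  finally show ?thesis unfolding prob_tau_ge_def .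
qed

definition nb :: "nat \<Rightarrow> nat \<Rightarrow> nat set" where
  "nb h v = {u \<in> bt_vertices h. (u, v) \<in> bt_edges h}"

definition phi :: "nat \<Rightarrow> nat state \<Rightarrow> real" where
  "phi h g = (\<Sum>v\<in>bt_vertices h. real (card (nb h v)) * (if g v = Neg then (1::real) else 0))"

lemma bt_finite: "finite (bt_vertices h)"
  unfolding bt_vertices_def by simp

lemma bt_one: "1 \<in> bt_vertices h"
proof -
  have "(1::nat) \<le> 2^h" by (rule one_le_power) simp
  moreover have "(2::nat)^(h+1) = 2 * 2^h" by simp
  ultimately have "(1::nat) \<le> 2^(h+1) - 1" by linarith
  then show ?thesis unfolding bt_vertices_def by simp
qed

lemma edge_sym: "(u, v) \<in> bt_edges h \<longleftrightarrow> (v, u) \<in> bt_edges h"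
  unfolding bt_edges_def by auto

lemma nb_finite: "finite (nb h v)"
  unfolding nb_def using bt_finite by auto

lemma nb_sub: "nb h v \<subseteq> {v div 2, 2 * v, 2 * v + 1}"
  unfolding nb_def bt_edges_def by auto

lemma nb_card: "card (nb h v) \<le> 3"
proof -
  have "card (nb h v) \<le> card {v div 2, 2 * v, 2 * v + 1}" by (rule card_mono, simp, rule nb_sub)
  also have "\<dots> \<le> 3" by (simp add: card_insert_if)
  finally show ?thesis .
qed

lemma nb_one: "nb h 1 \<subseteq> {2, 3}"
  unfolding nb_def bt_edges_def bt_vertices_def by auto

lemma nb_one_card: "card (nb h 1) \<le> 2"
proof -
  have "card (nb h 1) \<le> card {2::nat, 3}" by (rule card_mono, simp, rule nb_one)
  then show ?thesis by simp
qed

lemma parent_nb: "v \<in> bt_vertices h \<Longrightarrow> v \<noteq> 1 \<Longrightarrow> v div 2 \<in> nb h v"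
  unfolding nb_def bt_edges_def bt_vertices_def by auto

lemma st_label:
  "f \<in> set_pmf (st (bt_vertices h) (bt_edges h) 1 a b t) \<Longrightarrow>
     f 1 = Pos \<and> (\<forall>v. f v \<noteq> Bot \<longleftrightarrow> v \<in> bt_vertices h \<and> v < 2^(t+1))"
proof (induction t arbitrary: f)
  case 0
  then have f: "f = init_state 1" by simp
  have "f v \<noteq> Bot \<longleftrightarrow> v \<in> bt_vertices h \<and> v < 2^(0+1)" for v
  proof
    assume "f v \<noteq> Bot"
    then have "v = 1" using f unfolding init_state_def by (auto split: if_splits)
    then show "v \<in> bt_vertices h \<and> v < 2^(0+1)" using bt_one by simp
  next
    assume "v \<in> bt_vertices h \<and> v < 2^(0+1)"
    then have "v = 1" unfolding bt_vertices_def by simp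
    then show "f v \<noteq> Bot" using f unfolding init_state_def by simp
  qed
  then show ?case using f unfolding init_state_def by simp
next
  case (Suc t)
  from Suc.prems obtain f0 where f0: "f0 \<in> set_pmf (st (bt_vertices h) (bt_edges h) 1 a b t)"
    and f: "f \<in> set_pmf (step (bt_vertices h) (bt_edges h) 1 a b f0)" by auto
  note IH = Suc.IH[OF f0]
  note ss = step_set[OF bt_finite f]
  have f1: "f 1 = Pos"
  proof -
    have "f 1 \<in> set_pmf (vertex_update (bt_vertices h) (bt_edges h) 1 a b f0 1)" using ss(2) bt_one by blast
    from vu_set[OF bt_finite this] show ?thesis by blast
  qed
  have "f v \<noteq> Bot \<longleftrightarrow> v \<in> bt_vertices h \<and> v < 2^(Suc t+1)" for v
  proof (cases "v \<in> bt_vertices h")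
    case False then show ?thesis using ss(1) by auto
  next
    case vV: True
    let ?N = "labelled_nbrs (bt_vertices h) (bt_edges h) f0 v"
    have x: "f v \<in> set_pmf (vertex_update (bt_vertices h) (bt_edges h) 1 a b f0 v)"
      using ss(2) vV by auto
    note cs = vu_set[OF bt_finite x]
    have Nlab: "\<forall>w\<in>?N. f0 w \<noteq> Bot" unfolding labelled_nbrs_def by auto
    show ?thesis
    proof (cases "v = 1")
      case True
      have "(1::nat) < 2^(Suc t+1)" using power_strict_increasing[of 0 "Suc t+1" "2::nat"] by simp
      then have vl: "v < 2^(Suc t+1)" unfolding True .
      have "f v \<noteq> Bot" using f1 True by simp
      then show ?thesis using vl vV by blast
    next
      case v1: False
      show ?thesis
      proof (cases "v < 2^(Suc t + 1)")
        case True
        have p1: "v div 2 \<in> nb h v" by (rule parent_nb[OF vV v1])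
        then have pV: "v div 2 \<in> bt_vertices h" "(v div 2, v) \<in> bt_edges h" unfolding nb_def by auto
        have "v < 2^(t+1) * 2" using True by (simp add: mult.commute)
        then have "v div 2 < 2^(t+1)" by (rule less_mult_imp_div_less)
        then have "f0 (v div 2) \<noteq> Bot" using IH pV(1) by blast
        then have "v div 2 \<in> ?N" using pV unfolding labelled_nbrs_def by blast
        then have ne: "?N \<noteq> {}" by blast
        have "f v \<noteq> Bot"
        proof
          assume fb: "f v = Bot"
          have "(\<exists>w\<in>?N. f v = f0 w \<or> f v = neg_label (f0 w)) \<or> (f0 v \<noteq> Bot \<and> f v = f0 v)"
            using cs v1 ne by blast
          then show False
          proof
            assume "\<exists>w\<in>?N. f v = f0 w \<or> f v = neg_label (f0 w)"
            then obtain w where "w \<in> ?N" "f v = f0 w \<or> f v = neg_label (f0 w)" by blast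
            then show False using Nlab fb neg_label_nonbot by metis
          next
            assume "f0 v \<noteq> Bot \<and> f v = f0 v"
            then show False using fb by auto
          qed
        qed
        then show ?thesis using True vV by blast
      next
        case False
        have "(2::nat)^(t+1) \<le> 2^(Suc t+1)" by (rule power_increasing) simp_all
        then have "\<not> v < 2^(t+1)" using False by linarith
        then have f0v: "f0 v = Bot" using IH by blast
        have "?N = {}"
        proof (rule ccontr)
          assume "?N \<noteq> {}"
          then obtain u where u: "u \<in> ?N" by blast
          then have ub: "u < 2^(t+1)" "(u, v) \<in> bt_edges h" using IH unfolding labelled_nbrs_def by blast+
          have "v \<ge> 2^(t+1) * 2" using False by (simp add: mult.commute)
          then have "v div 2 \<ge> 2^(t+1)" by (metis div_le_mono nonzero_mult_div_cancel_right zero_neq_numeral)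
          moreover have "u = v div 2 \<or> v = u div 2" using ub(2) unfolding bt_edges_def by blast
          ultimately show False using ub(1) \<open>v \<ge> 2^(t+1) * 2\<close> by auto
        qed
        then have "f v = Bot" using cs v1 f0v by auto
        then show ?thesis using False by blast
      qed
    qed
  qed
  then show ?case using f1 by blast
qed

definition ineg :: "label \<Rightarrow> real" where "ineg x = (if x = Neg then 1 else 0)"

lemma pmf_bern:
  assumes "0 \<le> p" "p \<le> 1"
  shows "pmf (bernoulli_pmf p \<bind> (\<lambda>c. return_pmf (if c then x else y))) Neg = p * ineg x + (1 - p) * ineg y"
  using assms by (simp add: pmf_bind indicator_def ineg_def mult.commute)

lemma pmf_copy:
  assumes "finite V" "v \<noteq> r" "f v \<noteq> Bot" "labelled_nbrs V E f v \<noteq> {}" "0 \<le> b" "b \<le> 1"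
  shows "pmf (vertex_update V E r a b f v) Neg =
           (1 - b) * ineg (f v) + b * (\<Sum>w\<in>labelled_nbrs V E f v. ineg (f w)) / card (labelled_nbrs V E f v)"
proof -
  let ?N = "labelled_nbrs V E f v"
  have fin: "finite ?N" using assms(1) unfolding labelled_nbrs_def by auto
  have "vertex_update V E r a b f v = pmf_of_set ?N \<bind> (\<lambda>w. bernoulli_pmf b \<bind> (\<lambda>c. return_pmf (if c then f w else f v)))"
    using assms unfolding vertex_update_def Let_def by simp
  then have "pmf (vertex_update V E r a b f v) Neg =
     measure_pmf.expectation (pmf_of_set ?N) (\<lambda>w. pmf (bernoulli_pmf b \<bind> (\<lambda>c. return_pmf (if c then f w else f v))) Neg)"
    by (simp only: pmf_bind)
  also have "\<dots> = (\<Sum>w\<in>?N. pmf (bernoulli_pmf b \<bind> (\<lambda>c. return_pmf (if c then f w else f v))) Neg) / card ?N"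
    using fin assms(4) by (simp add: integral_pmf_of_set)
  also have "\<dots> = (\<Sum>w\<in>?N. b * ineg (f w) + (1 - b) * ineg (f v)) / card ?N"
    using assms(5,6) by (simp add: pmf_bern)
  also have "(\<Sum>w\<in>?N. b * ineg (f w) + (1 - b) * ineg (f v)) = b * (\<Sum>w\<in>?N. ineg (f w)) + real (card ?N) * ((1 - b) * ineg (f v))"
    by (simp add: sum.distrib sum_distrib_left)
  also have "(b * (\<Sum>w\<in>?N. ineg (f w)) + real (card ?N) * ((1 - b) * ineg (f v))) / card ?N = (1 - b) * ineg (f v) + b * (\<Sum>w\<in>?N. ineg (f w)) / card ?N"
  proof -
    have "card ?N > 0" using assms(4) fin card_gt_0_iff by blast
    then show ?thesis by (simp add: field_simps)
  qed
  finally show ?thesis .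
qed

lemma pmf_flip:
  assumes "finite V" "v \<noteq> r" "f v = Bot" "labelled_nbrs V E f v \<noteq> {}" "0 \<le> a" "a \<le> 1"
  shows "pmf (vertex_update V E r a b f v) Neg =
           (\<Sum>w\<in>labelled_nbrs V E f v. a * ineg (neg_label (f w)) + (1 - a) * ineg (f w)) / card (labelled_nbrs V E f v)"
proof -
  let ?N = "labelled_nbrs V E f v"
  have fin: "finite ?N" using assms(1) unfolding labelled_nbrs_def by auto
  have "vertex_update V E r a b f v = pmf_of_set ?N \<bind> (\<lambda>w. bernoulli_pmf a \<bind> (\<lambda>c. return_pmf (if c then neg_label (f w) else f w)))"
    using assms unfolding vertex_update_def Let_def by simp
  then have "pmf (vertex_update V E r a b f v) Neg =
     measure_pmf.expectation (pmf_of_set ?N) (\<lambda>w. pmf (bernoulli_pmf a \<bind> (\<lambda>c. return_pmf (if c then neg_label (f w) else f w))) Neg)"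
    by (simp only: pmf_bind)
  also have "\<dots> = (\<Sum>w\<in>?N. pmf (bernoulli_pmf a \<bind> (\<lambda>c. return_pmf (if c then neg_label (f w) else f w))) Neg) / card ?N"
    using fin assms(4) by (simp add: integral_pmf_of_set)
  also have "\<dots> = (\<Sum>w\<in>?N. a * ineg (neg_label (f w)) + (1 - a) * ineg (f w)) / card ?N"
    using assms(5,6) by (simp add: pmf_bern)
  finally show ?thesis .
qed

lemma phi_ineg: "phi h g = (\<Sum>v\<in>bt_vertices h. real (card (nb h v)) * ineg (g v))"
  unfolding phi_def ineg_def by simp

lemma ineg_bounds: "0 \<le> ineg x" "ineg x \<le> 1"
  unfolding ineg_def by auto

lemma integrable_ineg: "integrable (measure_pmf p) (\<lambda>x. c * ineg (F x))"
  by (rule measure_pmf.integrable_const_bound[where B="\<bar>c\<bar>"]) (auto simp: ineg_def)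

lemma integral_ineg: "measure_pmf.expectation p ineg = pmf p Neg"
proof -
  have "ineg = indicator {Neg}" unfolding ineg_def by (auto simp: indicator_def)
  then have "measure_pmf.expectation p ineg = measure_pmf.expectation p (indicator {Neg})" by simp
  also have "\<dots> = measure_pmf.prob p {Neg}" by simp
  also have "\<dots> = pmf p Neg" by (rule measure_pmf_single)
  finally show ?thesis .
qed

lemma exp_phi_step:
  "measure_pmf.expectation (step (bt_vertices h) (bt_edges h) 1 a b f) (phi h) =
   (\<Sum>v\<in>bt_vertices h. real (card (nb h v)) * pmf (vertex_update (bt_vertices h) (bt_edges h) 1 a b f v) Neg)"
proof -
  let ?P = "step (bt_vertices h) (bt_edges h) 1 a b f"
  have "measure_pmf.expectation ?P (phi h) =
        (\<Sum>v\<in>bt_vertices h. measure_pmf.expectation ?P (\<lambda>g. real (card (nb h v)) * ineg (g v)))"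
    unfolding phi_ineg by (rule Bochner_Integration.integral_sum) (rule integrable_ineg)
  also have "\<dots> = (\<Sum>v\<in>bt_vertices h. real (card (nb h v)) * pmf (vertex_update (bt_vertices h) (bt_edges h) 1 a b f v) Neg)"
  proof (rule sum.cong[OF refl])
    fix v assume v: "v \<in> bt_vertices h"
    have "measure_pmf.expectation ?P (\<lambda>g. ineg (g v)) =
          measure_pmf.expectation (map_pmf (\<lambda>g. g v) ?P) ineg" by simp
    also have "map_pmf (\<lambda>g. g v) ?P = vertex_update (bt_vertices h) (bt_edges h) 1 a b f v"
      unfolding step_def by (subst Pi_pmf_component[OF bt_finite]) (simp add: v)
    finally show "measure_pmf.expectation ?P (\<lambda>g. real (card (nb h v)) * ineg (g v)) =
       real (card (nb h v)) * pmf (vertex_update (bt_vertices h) (bt_edges h) 1 a b f v) Neg"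
      by (simp add: integral_ineg)
  qed
  finally show ?thesis .
qed

lemma double_sum: "(\<Sum>v\<in>bt_vertices h. \<Sum>w\<in>nb h v. F w) = (\<Sum>w\<in>bt_vertices h. real (card (nb h w)) * F w)"
proof -
  have "(\<Sum>v\<in>bt_vertices h. \<Sum>w\<in>nb h v. F w) =
        (\<Sum>v\<in>bt_vertices h. \<Sum>w\<in>bt_vertices h. if (w, v) \<in> bt_edges h then F w else 0)"
    unfolding nb_def by (simp add: sum.inter_filter[OF bt_finite])
  also have "\<dots> = (\<Sum>w\<in>bt_vertices h. \<Sum>v\<in>bt_vertices h. if (w, v) \<in> bt_edges h then F w else 0)"
    by (rule sum.swap)
  also have "\<dots> = (\<Sum>w\<in>bt_vertices h. real (card (nb h w)) * F w)"
  proof (rule sum.cong[OF refl])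
    fix w
    have "(\<Sum>v\<in>bt_vertices h. if (w, v) \<in> bt_edges h then F w else 0) =
          (\<Sum>v\<in>{v \<in> bt_vertices h. (w, v) \<in> bt_edges h}. F w)"
      by (rule sum.inter_filter[OF bt_finite, symmetric])
    also have "{v \<in> bt_vertices h. (w, v) \<in> bt_edges h} = nb h w"
      unfolding nb_def using edge_sym by blast
    finally show "(\<Sum>v\<in>bt_vertices h. if (w, v) \<in> bt_edges h then F w else 0) = real (card (nb h w)) * F w"
      by simp
  qed
  finally show ?thesis .
qed

lemma lab_nb:
  assumes "\<forall>v\<in>bt_vertices h. f v \<noteq> Bot"
  shows "labelled_nbrs (bt_vertices h) (bt_edges h) f v = nb h v"
  using assms unfolding labelled_nbrs_def nb_def by auto

lemma step_drift:
  assumes b: "0 \<le> b" "b \<le> 1" and f1: "f 1 = Pos" and lab: "\<forall>v\<in>bt_vertices h. f v \<noteq> Bot"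
  shows "measure_pmf.expectation (step (bt_vertices h) (bt_edges h) 1 a b f) (phi h) \<ge> phi h f - 2"
proof -
  let ?V = "bt_vertices h"
  define S1 where "S1 = (\<Sum>w\<in>nb h 1. ineg (f w))"
  define G where "G v = (1 - b) * (real (card (nb h v)) * ineg (f v)) + b * (\<Sum>w\<in>nb h v. ineg (f w))" for v
  have eq: "real (card (nb h v)) * pmf (vertex_update ?V (bt_edges h) 1 a b f v) Neg =
        G v - (if v = 1 then b * S1 else 0)" if v: "v \<in> ?V" for v
  proof (cases "v = 1")
    case True
    have "vertex_update ?V (bt_edges h) 1 a b f v = return_pmf Pos"
      using True unfolding vertex_update_def by simp
    moreover have "ineg (f v) = 0" using True f1 by (simp add: ineg_def)
    ultimately show ?thesis using True unfolding G_def S1_def by simp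
  next
    case False
    have N: "labelled_nbrs ?V (bt_edges h) f v = nb h v" by (rule lab_nb[OF lab])
    have ne: "nb h v \<noteq> {}" using parent_nb[OF v False] by auto
    have cpos: "card (nb h v) > 0" using ne nb_finite card_gt_0_iff by blast
    have fv: "f v \<noteq> Bot" using lab v by blast
    have "pmf (vertex_update ?V (bt_edges h) 1 a b f v) Neg =
          (1 - b) * ineg (f v) + b * (\<Sum>w\<in>nb h v. ineg (f w)) / card (nb h v)"
      using pmf_copy[where V="bt_vertices h" and E="bt_edges h" and f=f and v=v and r=1 and a=a and b=b] bt_finite False fv b ne N by simp
    then have "real (card (nb h v)) * pmf (vertex_update ?V (bt_edges h) 1 a b f v) Neg =
       real (card (nb h v)) * ((1 - b) * ineg (f v)) + b * (\<Sum>w\<in>nb h v. ineg (f w))"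
      using cpos by (simp add: distrib_left)
    then show ?thesis using False unfolding G_def by (simp add: mult.commute mult.left_commute)
  qed
  have "measure_pmf.expectation (step ?V (bt_edges h) 1 a b f) (phi h) =
        (\<Sum>v\<in>?V. G v - (if v = 1 then b * S1 else 0))"
    unfolding exp_phi_step using eq by (rule sum.cong[OF refl])
  also have "\<dots> = (\<Sum>v\<in>?V. G v) - (\<Sum>v\<in>?V. (if v = 1 then b * S1 else 0))"
    by (rule sum_subtractf)
  also have "(\<Sum>v\<in>?V. (if v = 1 then b * S1 else 0)) = b * S1"
    using bt_one bt_finite by (simp add: sum.delta)
  also have "(\<Sum>v\<in>?V. G v) = (1 - b) * phi h f + b * phi h f"
  proof -
    have "(\<Sum>v\<in>?V. G v) = (1 - b) * (\<Sum>v\<in>?V. real (card (nb h v)) * ineg (f v)) + b * (\<Sum>v\<in>?V. \<Sum>w\<in>nb h v. ineg (f w))"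
      unfolding G_def by (simp only: sum.distrib sum_distrib_left)
    then show ?thesis unfolding phi_ineg double_sum .
  qed
  finally have E: "measure_pmf.expectation (step ?V (bt_edges h) 1 a b f) (phi h) = (1 - b) * phi h f + b * phi h f - b * S1" .
  have S1: "S1 \<le> 2"
  proof -
    have "S1 \<le> (\<Sum>w\<in>nb h 1. 1)" unfolding S1_def by (rule sum_mono) (simp add: ineg_bounds)
    also have "\<dots> \<le> 2" using nb_one_card[of h] by simp
    finally show ?thesis .
  qed
  have S0: "0 \<le> S1" unfolding S1_def by (rule sum_nonneg) (simp add: ineg_bounds)
  have "b * S1 \<le> 1 * S1" by (rule mult_right_mono[OF b(2) S0])
  then have "b * S1 \<le> 2" using S1 by linarith
  moreover have "(1 - b) * phi h f + b * phi h f = phi h f" by (simp add: algebra_simps)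
  ultimately show ?thesis using E by linarith
qed

lemma flip_term: "0 \<le> a \<Longrightarrow> a \<le> 1/2 \<Longrightarrow> x \<noteq> Bot \<Longrightarrow> a * ineg (neg_label x) + (1 - a) * ineg x \<ge> a"
  by (cases x) (auto simp: ineg_def)

lemma leaf_bound:
  assumes a: "0 \<le> a" "a \<le> 1/2" and h: "h \<ge> 1" and f1: "f 1 = Pos"
    and lab: "\<forall>v. f v \<noteq> Bot \<longleftrightarrow> v \<in> bt_vertices h \<and> v < 2^h"
  shows "measure_pmf.expectation (step (bt_vertices h) (bt_edges h) 1 a b f) (phi h) \<ge> a * 2^h"
proof -
  let ?V = "bt_vertices h"
  let ?L = "{2^h..<2^(h+1)} :: nat set"
  let ?T = "\<lambda>v. real (card (nb h v)) * pmf (vertex_update ?V (bt_edges h) 1 a b f v) Neg"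
  have LV: "?L \<subseteq> ?V" unfolding bt_vertices_def
  proof
    fix v assume "v \<in> ?L"
    then have "2^h \<le> v" "v < 2^(h+1)" by simp_all
    moreover have "(1::nat) \<le> 2^h" by simp
    ultimately have "1 \<le> v" "v \<le> 2^(h+1) - 1" by linarith+
    then show "v \<in> {1..2^(h+1) - 1}" by simp
  qed
  have cardL: "card ?L = 2^h" by simp
  have "(2::nat)^1 \<le> 2^h" using h by (intro power_increasing) simp_all
  then have h2: "(2::nat) \<le> 2^h" by simp
  have leaf: "?T v \<ge> a" if v: "v \<in> ?L" for v
  proof -
    have vV: "v \<in> ?V" using LV v by blast
    have vge: "2^h \<le> v" using v by simp
    then have v1: "v \<noteq> 1" using h2 by linarith
    have "\<not> v < 2^h" using vge by linarith
    then have fv: "f v = Bot" using lab by blast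
    let ?N = "labelled_nbrs ?V (bt_edges h) f v"
    have p: "v div 2 \<in> nb h v" by (rule parent_nb[OF vV v1])
    then have pV: "v div 2 \<in> ?V" "(v div 2, v) \<in> bt_edges h" unfolding nb_def by auto
    have "v < 2^h * 2" using v by (simp add: mult.commute)
    then have "v div 2 < 2^h" by (rule less_mult_imp_div_less)
    then have "f (v div 2) \<noteq> Bot" using lab pV(1) by blast
    then have "v div 2 \<in> ?N" using pV unfolding labelled_nbrs_def by blast
    then have ne: "?N \<noteq> {}" by blast
    have fin: "finite ?N" using bt_finite unfolding labelled_nbrs_def by auto
    have cpos: "card ?N > 0" using ne fin card_gt_0_iff by blast
    have P: "pmf (vertex_update ?V (bt_edges h) 1 a b f v) Neg =
      (\<Sum>w\<in>?N. a * ineg (neg_label (f w)) + (1 - a) * ineg (f w)) / card ?N"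
      using pmf_flip[where V="?V" and E="bt_edges h" and f=f and v=v and r=1 and a=a and b=b] bt_finite v1 fv ne a
      by simp
    have "(\<Sum>w\<in>?N. a) \<le> (\<Sum>w\<in>?N. a * ineg (neg_label (f w)) + (1 - a) * ineg (f w))"
    proof (rule sum_mono)
      fix w assume "w \<in> ?N"
      then have "f w \<noteq> Bot" unfolding labelled_nbrs_def by blast
      then show "a \<le> a * ineg (neg_label (f w)) + (1 - a) * ineg (f w)" using flip_term a by blast
    qed
    then have "real (card ?N) * a \<le> (\<Sum>w\<in>?N. a * ineg (neg_label (f w)) + (1 - a) * ineg (f w))" by simp
    then have Pa: "pmf (vertex_update ?V (bt_edges h) 1 a b f v) Neg \<ge> a"
      unfolding P using cpos by (simp add: field_simps)
    have "card (nb h v) > 0" using p nb_finite card_gt_0_iff by blast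
    then have "card (nb h v) \<ge> 1" by simp
    then have "1 * pmf (vertex_update ?V (bt_edges h) 1 a b f v) Neg \<le> ?T v"
      by (intro mult_right_mono) simp_all
    then show ?thesis using Pa by linarith
  qed
  have "a * 2^h = (\<Sum>v\<in>?L. a)" using cardL by simp
  also have "\<dots> \<le> (\<Sum>v\<in>?L. ?T v)" by (rule sum_mono) (rule leaf)
  also have "\<dots> \<le> (\<Sum>v\<in>?V. ?T v)"
    by (rule sum_mono2[OF bt_finite LV]) simp
  also have "\<dots> = measure_pmf.expectation (step ?V (bt_edges h) 1 a b f) (phi h)"
    by (rule exp_phi_step[symmetric])
  finally show ?thesis .
qed

lemma phi_nonneg: "0 \<le> phi h g"
  unfolding phi_ineg by (intro sum_nonneg mult_nonneg_nonneg) (simp_all add: ineg_bounds)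

lemma phi_le: "phi h g \<le> 3 * real (card (bt_vertices h))"
proof -
  have "phi h g \<le> (\<Sum>v\<in>bt_vertices h. 3)"
    unfolding phi_ineg
  proof (rule sum_mono)
    fix v
    have "real (card (nb h v)) \<le> 3" using nb_card[of h v] by simp
    moreover have "0 \<le> ineg (g v)" "ineg (g v) \<le> 1" by (simp_all add: ineg_bounds)
    ultimately show "real (card (nb h v)) * ineg (g v) \<le> 3"
      by (metis mult_le_one mult.commute mult_left_le of_nat_0_le_iff order_trans)
  qed
  then show ?thesis by simp
qed

lemma phi_allpos: "all_pos (bt_vertices h) g \<Longrightarrow> phi h g = 0"
  unfolding phi_ineg all_pos_def by (simp add: ineg_def)

lemma integrable_phi: "integrable (measure_pmf p) (phi h)"
  by (rule measure_pmf.integrable_const_bound[where B="3 * real (card (bt_vertices h))"])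
     (auto simp: phi_nonneg phi_le abs_of_nonneg)

lemma nn_phi: "(\<integral>\<^sup>+ g. ennreal (phi h g) \<partial>measure_pmf p) = ennreal (measure_pmf.expectation p (phi h))"
  by (rule nn_integral_eq_integral[OF integrable_phi]) (simp add: phi_nonneg)

lemma lab_all:
  assumes "f \<in> set_pmf (st (bt_vertices h) (bt_edges h) 1 a b t)" "t \<ge> h"
  shows "f 1 = Pos" "\<forall>v\<in>bt_vertices h. f v \<noteq> Bot"
proof -
  note L = st_label[OF assms(1)]
  show "f 1 = Pos" using L by blast
  show "\<forall>v\<in>bt_vertices h. f v \<noteq> Bot"
  proof
    fix v assume v: "v \<in> bt_vertices h"
    have "(2::nat)^(h+1) \<le> 2^(t+1)" using assms(2) by (intro power_increasing) simp_all
    moreover have "v \<le> 2^(h+1) - 1" using v unfolding bt_vertices_def by simp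
    moreover have "(1::nat) \<le> 2^(h+1)" by simp
    ultimately have "v < 2^(t+1)" by linarith
    then show "f v \<noteq> Bot" using L v by blast
  qed
qed

lemma drift_iter:
  assumes b: "0 \<le> b" "b \<le> 1"
  shows "(\<integral>\<^sup>+ g. ennreal (phi h g) \<partial>measure_pmf (st (bt_vertices h) (bt_edges h) 1 a b h)) \<le>
         (\<integral>\<^sup>+ g. ennreal (phi h g) \<partial>measure_pmf (st (bt_vertices h) (bt_edges h) 1 a b (h + k))) + ennreal (2 * real k)"
proof (induction k)
  case 0 then show ?case by simp
next
  case (Suc k)
  let ?S = "st (bt_vertices h) (bt_edges h) 1 a b (h + k)"
  let ?St = "step (bt_vertices h) (bt_edges h) 1 a b"
  have pt: "ennreal (phi h f) \<le> (\<integral>\<^sup>+ g. ennreal (phi h g) \<partial>measure_pmf (?St f)) + 2"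
    if f: "f \<in> set_pmf ?S" for f
  proof -
    have "phi h f \<le> measure_pmf.expectation (?St f) (phi h) + 2"
      using step_drift[OF b lab_all[OF f], where a=a] by linarith
    then have "ennreal (phi h f) \<le> ennreal (measure_pmf.expectation (?St f) (phi h) + 2)"
      by (rule ennreal_leI)
    also have "\<dots> = ennreal (measure_pmf.expectation (?St f) (phi h)) + 2"
      by (subst ennreal_plus) (simp_all add: integral_nonneg_AE phi_nonneg)
    finally show ?thesis by (simp add: nn_phi)
  qed
  have "(\<integral>\<^sup>+ g. ennreal (phi h g) \<partial>measure_pmf ?S) \<le>
        (\<integral>\<^sup>+ f. (\<integral>\<^sup>+ g. ennreal (phi h g) \<partial>measure_pmf (?St f)) + 2 \<partial>measure_pmf ?S)"
    by (rule nn_integral_mono_AE, rule AE_pmfI, rule pt)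
  also have "\<dots> = (\<integral>\<^sup>+ f. (\<integral>\<^sup>+ g. ennreal (phi h g) \<partial>measure_pmf (?St f)) \<partial>measure_pmf ?S) + 2"
    by (subst nn_integral_add) (simp_all add: measure_pmf.emeasure_space_1)
  also have "(\<integral>\<^sup>+ f. (\<integral>\<^sup>+ g. ennreal (phi h g) \<partial>measure_pmf (?St f)) \<partial>measure_pmf ?S) =
      (\<integral>\<^sup>+ g. ennreal (phi h g) \<partial>measure_pmf (st (bt_vertices h) (bt_edges h) 1 a b (h + Suc k)))"
    by simp
  finally have "(\<integral>\<^sup>+ g. ennreal (phi h g) \<partial>measure_pmf ?S) \<le>
      (\<integral>\<^sup>+ g. ennreal (phi h g) \<partial>measure_pmf (st (bt_vertices h) (bt_edges h) 1 a b (h + Suc k))) + 2" .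
  then have B: "(\<integral>\<^sup>+ g. ennreal (phi h g) \<partial>measure_pmf ?S) + ennreal (2 * real k) \<le>
      ((\<integral>\<^sup>+ g. ennreal (phi h g) \<partial>measure_pmf (st (bt_vertices h) (bt_edges h) 1 a b (h + Suc k))) + 2) + ennreal (2 * real k)"
    by (rule add_right_mono)
  have C: "2 + ennreal (2 * real k) = ennreal (2 * real (Suc k))"
  proof -
    have e1: "2 * real (Suc k) = 2 + 2 * real k" by simp
    have "ennreal (2 + 2 * real k) = ennreal 2 + ennreal (2 * real k)"
      by (rule ennreal_plus) simp_all
    then show ?thesis unfolding e1 by simp
  qed
  have F: "(\<integral>\<^sup>+ g. ennreal (phi h g) \<partial>measure_pmf ?S) + ennreal (2 * real k) \<le>
      (\<integral>\<^sup>+ g. ennreal (phi h g) \<partial>measure_pmf (st (bt_vertices h) (bt_edges h) 1 a b (h + Suc k))) + ennreal (2 * real (Suc k))"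
    using B unfolding add.assoc C .
  show ?case by (rule order_trans[OF Suc.IH F])
qed

lemma leaf_nn:
  assumes a: "0 \<le> a" "a \<le> 1/2" and h: "h \<ge> 1"
  shows "ennreal (a * 2^h) \<le> (\<integral>\<^sup>+ g. ennreal (phi h g) \<partial>measure_pmf (st (bt_vertices h) (bt_edges h) 1 a b h))"
proof -
  let ?S = "st (bt_vertices h) (bt_edges h) 1 a b (h - 1)"
  let ?St = "step (bt_vertices h) (bt_edges h) 1 a b"
  have hh: "h = Suc (h - 1)" using h by simp
  have pt: "ennreal (a * 2^h) \<le> (\<integral>\<^sup>+ g. ennreal (phi h g) \<partial>measure_pmf (?St f))"
    if f: "f \<in> set_pmf ?S" for f
  proof -
    note L = st_label[OF f]
    have "h - 1 + 1 = h" using h by simp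
    then have lab: "\<forall>v. f v \<noteq> Bot \<longleftrightarrow> v \<in> bt_vertices h \<and> v < 2^h" using L by metis
    have "a * 2^h \<le> measure_pmf.expectation (?St f) (phi h)"
      by (rule leaf_bound[OF a h _ lab]) (use L in blast)
    then show ?thesis by (simp add: nn_phi ennreal_leI)
  qed
  have "ennreal (a * 2^h) = (\<integral>\<^sup>+ f. ennreal (a * 2^h) \<partial>measure_pmf ?S)"
    by (simp add: measure_pmf.emeasure_space_1)
  also have "\<dots> \<le> (\<integral>\<^sup>+ f. (\<integral>\<^sup>+ g. ennreal (phi h g) \<partial>measure_pmf (?St f)) \<partial>measure_pmf ?S)"
    by (rule nn_integral_mono_AE, rule AE_pmfI, rule pt)
  also have "\<dots> = (\<integral>\<^sup>+ g. ennreal (phi h g) \<partial>measure_pmf (st (bt_vertices h) (bt_edges h) 1 a b (Suc (h - 1))))"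
    by simp
  finally show ?thesis using hh by metis
qed

lemma markov_phi:
  "(\<integral>\<^sup>+ g. ennreal (phi h g) \<partial>measure_pmf p) \<le>
     ennreal (3 * real (card (bt_vertices h))) * emeasure (measure_pmf p) {g. \<not> all_pos (bt_vertices h) g}"
proof -
  have "(\<integral>\<^sup>+ g. ennreal (phi h g) \<partial>measure_pmf p) \<le>
        (\<integral>\<^sup>+ g. ennreal (3 * real (card (bt_vertices h))) * indicator {g. \<not> all_pos (bt_vertices h) g} g \<partial>measure_pmf p)"
  proof (rule nn_integral_mono)
    fix g
    show "ennreal (phi h g) \<le> ennreal (3 * real (card (bt_vertices h))) * indicator {g. \<not> all_pos (bt_vertices h) g} g"
    proof (cases "all_pos (bt_vertices h) g")
      case True then show ?thesis using phi_allpos by simp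
    next
      case False then show ?thesis using phi_le[of h g] by (simp add: ennreal_leI)
    qed
  qed
  also have "\<dots> = ennreal (3 * real (card (bt_vertices h))) * emeasure (measure_pmf p) {g. \<not> all_pos (bt_vertices h) g}"
    by (rule nn_integral_cmult_indicator) simp
  finally show ?thesis .
qed

lemma card_bt: "card (bt_vertices h) = 2^(h+1) - 1"
  unfolding bt_vertices_def by simp

lemma main_bound:
  assumes a: "0 < a" "a < 1/2" and b: "0 < b" "b < 1" and h: "h \<ge> 1"
    and m: "real m \<le> a / 8 * real (2^(h+1) - 1 :: nat)"
  shows "measure_pmf.prob (st (bt_vertices h) (bt_edges h) 1 a b m) {f. \<not> all_pos (bt_vertices h) f} \<ge> a / 12"
proof -
  let ?S = "st (bt_vertices h) (bt_edges h) 1 a b"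
  let ?A = "{f. \<not> all_pos (bt_vertices h) f}"
  let ?P = "measure_pmf.prob (?S m) ?A"
  define X :: real where "X = 2^h"
  have X0: "X > 0" unfolding X_def by simp
  have p1: "(1::nat) \<le> 2^(h+1)" by simp
  have nX: "real (2^(h+1) - 1 :: nat) = 2 * X - 1"
    using p1 unfolding X_def by (simp add: of_nat_diff)
  show ?thesis
  proof (cases "m < h")
    case True
    let ?l = "2^(h+1) - 1 :: nat"
    have lV: "?l \<in> bt_vertices h" using p1 bt_one unfolding bt_vertices_def by auto
    have "(2::nat)^(m+1) \<le> 2^h" using True by (intro power_increasing) simp_all
    moreover have "(2::nat)^h \<le> ?l" by simp
    ultimately have "\<not> ?l < 2^(m+1)" by linarith
    then have "\<forall>f\<in>set_pmf (?S m). f ?l = Bot" using st_label by blast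
    then have sub: "set_pmf (?S m) \<subseteq> ?A" using lV unfolding all_pos_def by fastforce
    have "?P = measure_pmf.prob (?S m) (?A \<inter> set_pmf (?S m))" by (simp add: measure_Int_set_pmf)
    also have "?A \<inter> set_pmf (?S m) = set_pmf (?S m)" using sub by blast
    also have "measure_pmf.prob (?S m) (set_pmf (?S m)) = 1"
      by (subst measure_pmf.prob_eq_1) (auto simp: AE_measure_pmf_iff)
    finally show ?thesis using a by simp
  next
    case False
    then obtain k where k: "m = h + k" by (metis le_Suc_ex not_less)
    have "ennreal (a * 2^h) \<le> (\<integral>\<^sup>+ g. ennreal (phi h g) \<partial>measure_pmf (?S h))"
      by (rule leaf_nn) (use a h in auto)
    also have "\<dots> \<le> (\<integral>\<^sup>+ g. ennreal (phi h g) \<partial>measure_pmf (?S m)) + ennreal (2 * real k)"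
      unfolding k by (rule drift_iter) (use b in auto)
    also have "\<dots> \<le> ennreal (3 * real (card (bt_vertices h))) * emeasure (measure_pmf (?S m)) ?A + ennreal (2 * real k)"
      by (rule add_right_mono) (rule markov_phi)
    also have "\<dots> = ennreal (3 * real (card (bt_vertices h)) * ?P + 2 * real k)"
      by (simp add: measure_pmf.emeasure_eq_measure ennreal_mult ennreal_plus)
    finally have E: "a * X \<le> 3 * real (card (bt_vertices h)) * ?P + 2 * real k"
      unfolding X_def by (subst (asm) ennreal_le_iff) (simp_all add: measure_nonneg)
    have cV: "real (card (bt_vertices h)) = 2 * X - 1" unfolding card_bt using nX .
    have P0: "0 \<le> ?P" by (rule measure_nonneg)
    have "real k \<le> real m" using k by simp
    also have "\<dots> \<le> a / 8 * (2 * X - 1)" using m nX by simp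
    also have "\<dots> \<le> a / 4 * X" using a by (simp add: field_simps)
    finally have kb: "2 * real k \<le> a / 2 * X" by simp
    have "3 * real (card (bt_vertices h)) * ?P \<le> 6 * X * ?P"
      unfolding cV using P0 X0 by (intro mult_right_mono) simp_all
    then have "a / 2 * X \<le> 6 * X * ?P" using E kb by linarith
    then have "X * (a / 12) \<le> X * ?P" by (simp add: field_simps)
    then show ?thesis using X0 by simp
  qed
qed

theorem mainTheorem18:
  fixes a b :: real
  assumes "0 < a" "a < 1/2" "0 < b" "b < 1"
  shows "\<exists>c1 > 0. \<exists>c2 > 0. \<exists>h0. \<forall>h \<ge> h0.
           prob_tau_ge (bt_vertices h) (bt_edges h) 1 a b
              (nat \<lceil>c2 * real (2^(h+1) - 1 :: nat)\<rceil>) \<ge> c1 * a"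
proof -
  have main: "prob_tau_ge (bt_vertices h) (bt_edges h) 1 a b (nat \<lceil>a / 8 * real (2^(h+1) - 1 :: nat)\<rceil>) \<ge> 1/12 * a"
    if h: "1 \<le> h" for h
  proof -

  let ?n = "real (2^(h+1) - 1 :: nat)"
  let ?T = "nat \<lceil>a / 8 * ?n\<rceil>"
  have p1: "(2::nat) \<le> 2^(h+1)" by (simp add: Suc_leI)
  then have n1: "?n \<ge> 1" by simp
  have a8: "a / 8 > 0" using assms by simp
  have n0: "?n > 0" using n1 by linarith
  have xpos: "a / 8 * ?n > 0" using a8 n0 by (rule mult_pos_pos)
  have T0: "?T > 0" using xpos by simp
  have "real ?T < a / 8 * ?n + 1" using xpos by linarith
  then have m: "real (?T - 1) \<le> a / 8 * ?n" using T0 by (simp add: of_nat_diff)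
  have "prob_tau_ge (bt_vertices h) (bt_edges h) 1 a b ?T \<ge>
        measure_pmf.prob (st (bt_vertices h) (bt_edges h) 1 a b (?T - 1)) {f. \<not> all_pos (bt_vertices h) f}"
    by (rule prob_tau_ge_lb[OF bt_finite bt_one T0])
  moreover have "measure_pmf.prob (st (bt_vertices h) (bt_edges h) 1 a b (?T - 1)) {f. \<not> all_pos (bt_vertices h) f} \<ge> a / 12"
    by (rule main_bound[OF assms h m])
  ultimately show ?thesis by simp
  qed
  show ?thesis
    apply (rule exI[of _ "1/12"], rule conjI, simp)
    apply (rule exI[of _ "a/8"], rule conjI)
    using assms apply simp
    apply (rule exI[of _ 1])
    using main by blast
qed

end
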